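(* Let $\mathcal{A}=\{a_1,a_2,\ldots\}$ be a countably infinite set, let $X$ be a discrete random variable taking values in $\{a_1,\ldots,a_m\}$ for some $m\in\mathbb{N}$, and let $Y$ be a discrete random variable taking values in $\mathcal{A}$. Assume $d_{\mathrm{TV}}(X,Y)\le\eta$ for some $\eta\in(0,1)$. Let $M$ be an integer with $M\ge\max\{m+1,\frac{1}{1-\eta}\}$, and assume that for some $\mu>0$, $$-\sum_{i=M}^\infty P_Y(a_i)\log P_Y(a_i)\le\mu.$$ Then $$|H(X)-H(Y)|\le\eta\log(M-1)+h(\eta)+\mu.$$
   Context: The total variation distance is $d_{\mathrm{TV}}(X,Y) = \frac12\sum_{u\in\mathcal{A}}|P_X(u)-P_Y(u)|$, where $P_X,P_Y$ are the probability mass functions. All logarithms are natural and entropies are in nats, with $0\log0=0$. $h(x) = -x\log x-(1-x)\log(1-x)$ denotes the binary entropy function. *)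

theory Defs
  imports "HOL-Probability.Probability"
begin

definition d_tv :: "'a pmf \<Rightarrow> 'a pmf \<Rightarrow> real" where
  "d_tv p q = (1/2) * infsum (\<lambda>u. \<bar>pmf p u - pmf q u\<bar>) UNIV"

text \<open>Shannon entropy in nats; note ln 0 = 0 in Isabelle, so 0 log 0 = 0.\<close>
definition entropy_pmf :: "'a pmf \<Rightarrow> real" where
  "entropy_pmf p = infsum (\<lambda>u. - pmf p u * ln (pmf p u)) UNIV"

definition bin_entropy :: "real \<Rightarrow> real" where
  "bin_entropy x = - x * ln x - (1 - x) * ln (1 - x)"

end

theory Submission
  imports Defs
begin

lemma subadd_nlg:
  fixes s t :: real assumes "0 \<le> s" "0 \<le> t"
  shows "-(s+t)*ln(s+t) \<le> -s*ln s - t*ln t"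
proof (cases "s = 0 \<or> t = 0")
  case True then show ?thesis by auto
next
  case False
  then have sp: "s > 0" "t > 0" using assms by auto
  have "ln s \<le> ln (s+t)" "ln t \<le> ln (s+t)" using sp by auto
  then have "s * ln s \<le> s * ln (s+t)" "t * ln t \<le> t * ln (s+t)"
    using sp by (auto intro: mult_left_mono)
  then show ?thesis by (simp add: algebra_simps)
qed

lemma mixlow:
  fixes c f d :: real assumes "0 \<le> c" "0 \<le> f" "0 < d" "d < 1"
  shows "-(c+f)*ln(c+f) \<ge> -c*ln c - f*ln f + c*ln(1-d) + f*ln d"
proof -
  have l1: "ln (1-d) < 0" "ln d < 0" using assms by auto
  consider "c = 0" | "f = 0" | "c > 0" "f > 0" using assms by force
  then show ?thesis
  proof cases
    case 1 then show ?thesis using l1 assms by (simp add: mult_nonneg_nonpos)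
  next
    case 2 then show ?thesis using l1 assms by (simp add: mult_nonneg_nonpos)
  next
    case 3
    define s where "s = c + f"
    have sp: "s > 0" using 3 s_def by auto
    have a1: "ln ((1-d) * s / c) \<le> (1-d) * s / c - 1" using 3 sp assms by (intro ln_le_minus_one) auto
    have a2: "ln (d * s / f) \<le> d * s / f - 1" using 3 sp assms by (intro ln_le_minus_one) auto
    have e1: "ln ((1-d) * s / c) = ln (1-d) + ln s - ln c" using 3 sp assms by (simp add: ln_div ln_mult)
    have e2: "ln (d * s / f) = ln d + ln s - ln f" using 3 sp assms by (simp add: ln_div ln_mult)
    have b1: "c * (ln (1-d) + ln s - ln c) \<le> (1-d) * s - c"
    proof -
      have "c * (ln (1-d) + ln s - ln c) \<le> c * ((1-d) * s / c - 1)"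
        using a1 e1 3 by (intro mult_left_mono) auto
      also have "\<dots> = (1-d) * s - c" using 3 by (simp add: field_simps)
      finally show ?thesis .
    qed
    have b2: "f * (ln d + ln s - ln f) \<le> d * s - f"
    proof -
      have "f * (ln d + ln s - ln f) \<le> f * (d * s / f - 1)"
        using a2 e2 3 by (intro mult_left_mono) auto
      also have "\<dots> = d * s - f" using 3 by (simp add: field_simps)
      finally show ?thesis .
    qed
    show ?thesis using b1 b2 unfolding s_def[symmetric] by (simp add: s_def algebra_simps)
  qed
qed

lemma gibbs_bound:
  fixes e :: "nat \<Rightarrow> real"
  assumes "finite S" "\<And>i. i \<in> S \<Longrightarrow> e i > 0" "sum e S = d" "d > 0"
  shows "(\<Sum>i\<in>S. - e i * ln (e i)) \<le> d * ln (card S) - d * ln d"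
proof -
  have ne: "S \<noteq> {}" using assms by auto
  define k where "k = real (card S)"
  have kp: "k > 0" using ne assms(1) k_def by (simp add: card_gt_0_iff)
  have pt: "- e i * ln (e i) \<le> e i * ln k - e i * ln d + d / k - e i" if "i \<in> S" for i
  proof -
    have ep: "e i > 0" using assms that by auto
    have "ln (d / (k * e i)) \<le> d / (k * e i) - 1" using ep kp assms by (intro ln_le_minus_one) auto
    moreover have "ln (d / (k * e i)) = ln d - ln k - ln (e i)" using ep kp assms by (simp add: ln_div ln_mult)
    ultimately have "e i * (ln d - ln k - ln (e i)) \<le> e i * (d / (k * e i) - 1)"
      using ep by (intro mult_left_mono) auto
    also have "\<dots> = d / k - e i" using ep kp by (simp add: field_simps)
    finally show ?thesis by (simp add: algebra_simps)
  qed
  have "(\<Sum>i\<in>S. - e i * ln (e i)) \<le> (\<Sum>i\<in>S. e i * ln k - e i * ln d + d / k - e i)"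
    using pt by (rule sum_mono)
  also have "\<dots> = d * ln k - d * ln d + real (card S) * (d / k) - d"
    using assms by (simp add: sum.distrib sum_subtractf sum_distrib_right[symmetric])
  also have "\<dots> = d * ln k - d * ln d" using kp k_def by simp
  finally show ?thesis using k_def by simp
qed

lemma tangent_bound:
  fixes d eta N :: real
  assumes "0 < d" "d \<le> eta" "eta < 1" "N * (1 - eta) \<ge> 1"
  shows "d * ln (N - 1) + bin_entropy d \<le> eta * ln (N - 1) + bin_entropy eta"
proof -
  have etap: "eta > 0" using assms by auto
  have N1: "N - 1 > 0"
  proof -
    have "N * (1-eta) > 0" using assms by linarith
    then have "N > 0" using assms by (simp add: zero_less_mult_iff)
    then have "N * eta > 0" using etap by simp
    then show ?thesis using assms by (simp add: algebra_simps)
  qed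
  have a1: "d * ln (eta / d) \<le> eta - d"
  proof -
    have "d * ln (eta / d) \<le> d * (eta / d - 1)" using assms etap by (intro mult_left_mono ln_le_minus_one) auto
    also have "\<dots> = eta - d" using assms by (simp add: field_simps)
    finally show ?thesis .
  qed
  have a2: "(1-d) * ln ((1-eta) / (1-d)) \<le> d - eta"
  proof -
    have "(1-d) * ln ((1-eta) / (1-d)) \<le> (1-d) * ((1-eta) / (1-d) - 1)" using assms etap by (intro mult_left_mono ln_le_minus_one) auto
    also have "\<dots> = d - eta" using assms by (simp add: field_simps)
    finally show ?thesis .
  qed
  have e1: "ln (eta / d) = ln eta - ln d" using assms etap by (simp add: ln_div)
  have e2: "ln ((1-eta) / (1-d)) = ln (1-eta) - ln (1-d)" using assms by (simp add: ln_div)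
  have h1: "bin_entropy d - bin_entropy eta \<le> (eta - d) * (ln eta - ln (1-eta))"
    using a1 a2 e1 e2 unfolding bin_entropy_def by (simp add: algebra_simps)
  have "eta \<le> (1-eta) * (N-1)" using assms by (simp add: algebra_simps)
  then have "ln eta \<le> ln ((1-eta) * (N-1))" using etap by simp
  also have "\<dots> = ln (1-eta) + ln (N-1)" using N1 assms by (simp add: ln_mult)
  finally have "ln eta - ln (1-eta) \<le> ln (N-1)" by simp
  then have "(eta - d) * (ln eta - ln (1-eta)) \<le> (eta - d) * ln (N-1)"
    using assms by (intro mult_left_mono) auto
  with h1 show ?thesis by (simp add: algebra_simps)
qed

lemma fin_core:
  fixes p q :: "nat \<Rightarrow> real" and I :: "nat set"
  assumes fin: "finite I" and pn: "\<And>i. i \<in> I \<Longrightarrow> p i \<ge> 0" and qn: "\<And>i. i \<in> I \<Longrightarrow> q i \<ge> 0"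
    and ps: "sum p I = 1" and qs: "sum q I = 1"
    and dd: "d = (\<Sum>i\<in>I. max (p i - q i) 0)" and d0: "0 < d" and d1: "d < 1"
  shows "(\<Sum>i\<in>I. - p i * ln (p i)) - (\<Sum>i\<in>I. - q i * ln (q i)) \<le> d * ln (real (card I) - 1) + bin_entropy d"
proof -
  define c where "c i = min (p i) (q i)" for i
  define e where "e i = max (p i - q i) 0" for i
  define f where "f i = max (q i - p i) 0" for i
  have pe: "p i = c i + e i" for i unfolding c_def e_def by auto
  have qf: "q i = c i + f i" for i unfolding c_def f_def by auto
  have cn: "c i \<ge> 0" if "i \<in> I" for i using pn qn that c_def by auto
  have en: "e i \<ge> 0" for i using e_def by auto
  have fn: "f i \<ge> 0" for i using f_def by auto
  have se: "sum e I = d" using dd e_def by simp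
  have sc: "sum c I = 1 - d" using ps se pe by (simp add: sum.distrib)
  have sf: "sum f I = d" using qs sc qf by (simp add: sum.distrib)
  have A: "(\<Sum>i\<in>I. - p i * ln (p i)) \<le> (\<Sum>i\<in>I. - c i * ln (c i)) + (\<Sum>i\<in>I. - e i * ln (e i))"
    unfolding sum.distrib[symmetric] pe using subadd_nlg cn en by (intro sum_mono) (simp add: algebra_simps)
  have B: "(\<Sum>i\<in>I. - q i * ln (q i)) \<ge> (\<Sum>i\<in>I. - c i * ln (c i) - f i * ln (f i) + c i * ln (1-d) + f i * ln d)"
    unfolding qf
  proof (intro sum_mono)
    fix i assume "i \<in> I"
    from mixlow[OF cn[OF this] fn[of i] d0 d1]
    show "- c i * ln (c i) - f i * ln (f i) + c i * ln (1-d) + f i * ln d \<le> - (c i + f i) * ln (c i + f i)" by simp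
  qed
  have B2: "(\<Sum>i\<in>I. - c i * ln (c i) - f i * ln (f i) + c i * ln (1-d) + f i * ln d)
     = (\<Sum>i\<in>I. - c i * ln (c i)) + (\<Sum>i\<in>I. - f i * ln (f i)) + (1-d) * ln (1-d) + d * ln d"
    using sc sf by (simp add: sum.distrib sum_subtractf sum_distrib_right[symmetric] sum_negf)
  have fle: "f i \<le> d" if "i \<in> I" for i
    using member_le_sum[of i I f] fn that fin sf by auto
  have C: "(\<Sum>i\<in>I. - f i * ln (f i)) \<ge> - d * ln d"
  proof -
    have "(\<Sum>i\<in>I. - f i * ln (f i)) \<ge> (\<Sum>i\<in>I. - f i * ln d)"
    proof (intro sum_mono)
      fix i assume i: "i \<in> I"
      show "- f i * ln d \<le> - f i * ln (f i)"
      proof (cases "f i = 0")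
        case False
        then have "ln (f i) \<le> ln d" using fn[of i] fle[OF i] by simp
        then show ?thesis using fn[of i] by (simp add: mult_left_mono)
      qed simp
    qed
    also have "(\<Sum>i\<in>I. - f i * ln d) = - d * ln d" using sf by (simp add: sum_distrib_right[symmetric] sum_negf)
    finally show ?thesis .
  qed
  define S where "S = {i\<in>I. e i > 0}"
  have finS: "finite S" using fin S_def by auto
  have D1: "(\<Sum>i\<in>I. - e i * ln (e i)) = (\<Sum>i\<in>S. - e i * ln (e i))"
    unfolding S_def using fin en by (intro sum.mono_neutral_right) (auto simp: not_less intro: antisym)
  have sS: "sum e S = d"
  proof -
    have "sum e I = sum e S"
      unfolding S_def using fin en by (intro sum.mono_neutral_right) (auto simp: not_less intro: antisym)
    then show ?thesis using se by simp
  qed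
  have D: "(\<Sum>i\<in>I. - e i * ln (e i)) \<le> d * ln (card S) - d * ln d"
    unfolding D1 using gibbs_bound[OF finS _ sS d0] S_def by auto
  obtain j where j: "j \<in> I" "f j > 0"
  proof (rule ccontr)
    assume "\<not> thesis"
    with that have "\<forall>i\<in>I. f i = 0" using fn by (meson antisym not_less)
    then have "sum f I = 0" by simp
    with sf d0 show False by simp
  qed
  have "e j = 0" using j unfolding e_def f_def by auto
  then have "S \<subseteq> I - {j}" using S_def by auto
  then have "card S \<le> card (I - {j})" using fin by (intro card_mono) auto
  also have "\<dots> = card I - 1" using j fin by simp
  finally have cS: "card S \<le> card I - 1" .
  have Sne: "S \<noteq> {}" using sS d0 by auto
  have cS1: "card S \<ge> 1" using Sne finS by (simp add: Suc_le_eq card_gt_0_iff)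
  have "real (card S) \<le> real (card I) - 1" using cS cS1 by linarith
  then have "ln (card S) \<le> ln (real (card I) - 1)" using cS1 by simp
  then have E: "d * ln (card S) \<le> d * ln (real (card I) - 1)" using d0 by (simp add: mult_left_mono)
  show ?thesis using A B B2 C D E unfolding bin_entropy_def by (simp add: algebra_simps)
qed

lemma fin_thm:
  fixes p q :: "nat \<Rightarrow> real" and I :: "nat set"
  assumes fin: "finite I" and pn: "\<And>i. i \<in> I \<Longrightarrow> p i \<ge> 0" and qn: "\<And>i. i \<in> I \<Longrightarrow> q i \<ge> 0"
    and ps: "sum p I = 1" and qs: "sum q I = 1"
    and tv: "(1/2) * (\<Sum>i\<in>I. \<bar>p i - q i\<bar>) \<le> eta" and e0: "0 < eta" and e1: "eta < 1"
    and N: "real (card I) * (1 - eta) \<ge> 1"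
  shows "\<bar>(\<Sum>i\<in>I. - p i * ln (p i)) - (\<Sum>i\<in>I. - q i * ln (q i))\<bar> \<le> eta * ln (real (card I) - 1) + bin_entropy eta"
proof -
  define d where "d = (\<Sum>i\<in>I. max (p i - q i) 0)"
  have d': "d = (\<Sum>i\<in>I. max (q i - p i) 0)"
  proof -
    have "(\<Sum>i\<in>I. max (p i - q i) 0) - (\<Sum>i\<in>I. max (q i - p i) 0) = (\<Sum>i\<in>I. p i - q i)"
      unfolding sum_subtractf[symmetric] by (intro sum.cong) auto
    also have "\<dots> = 0" using ps qs by (simp add: sum_subtractf)
    finally show ?thesis unfolding d_def by simp
  qed
  have "(\<Sum>i\<in>I. \<bar>p i - q i\<bar>) = (\<Sum>i\<in>I. max (p i - q i) 0) + (\<Sum>i\<in>I. max (q i - p i) 0)"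
    unfolding sum.distrib[symmetric] by (intro sum.cong) auto
  then have dle: "d \<le> eta" using tv d' d_def by simp
  have dn: "d \<ge> 0" unfolding d_def by (intro sum_nonneg) auto
  have RHS0: "0 \<le> eta * ln (real (card I) - 1) + bin_entropy eta"
  proof -
    have c1: "real (card I) - 1 \<ge> 1"
    proof -
      have cp: "real (card I) > 0"
      proof (rule ccontr)
        assume "\<not> real (card I) > 0"
        then have "real (card I) = 0" by simp
        then show False using N by simp
      qed
      then have "real (card I) * eta > 0" using e0 by simp
      then have "real (card I) > 1" using N by (simp add: algebra_simps)
      then have "card I \<ge> 2" by linarith
      then show ?thesis by simp
    qed
    have "eta * ln (real (card I) - 1) \<ge> 0" using c1 e0 by simp
    moreover have "- eta * ln eta \<ge> 0" using e0 e1 by (simp add: mult_nonneg_nonpos)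
    moreover have "- (1-eta) * ln (1-eta) \<ge> 0"
    proof -
      have "ln (1-eta) \<le> 0" using e0 e1 by simp
      then have "(1-eta) * ln (1-eta) \<le> 0" using e1 by (simp add: mult_nonneg_nonpos)
      then show ?thesis by linarith
    qed
    ultimately show ?thesis unfolding bin_entropy_def by linarith
  qed
  show ?thesis
  proof (cases "d = 0")
    case True
    have "\<forall>i\<in>I. max (p i - q i) 0 = 0" using True fin unfolding d_def
      by (subst sum_nonneg_eq_0_iff[symmetric]) auto
    moreover have "\<forall>i\<in>I. max (q i - p i) 0 = 0" using True fin unfolding d'
      by (subst sum_nonneg_eq_0_iff[symmetric]) auto
    ultimately have "\<forall>i\<in>I. p i = q i"
      by (metis (no_types, lifting) antisym diff_le_0_iff_le max.cobounded1)
    then have "(\<Sum>i\<in>I. - p i * ln (p i)) = (\<Sum>i\<in>I. - q i * ln (q i))" by simp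
    then show ?thesis using RHS0 by simp
  next
    case False
    then have d0: "d > 0" using dn by simp
    have d1: "d < 1" using dle e1 by simp
    have tb: "d * ln (real (card I) - 1) + bin_entropy d \<le> eta * ln (real (card I) - 1) + bin_entropy eta"
      using tangent_bound[OF d0 dle e1 N] .
    have 1: "(\<Sum>i\<in>I. - p i * ln (p i)) - (\<Sum>i\<in>I. - q i * ln (q i)) \<le> d * ln (real (card I) - 1) + bin_entropy d"
      using fin_core[OF fin pn qn ps qs d_def d0 d1] .
    have 2: "(\<Sum>i\<in>I. - q i * ln (q i)) - (\<Sum>i\<in>I. - p i * ln (p i)) \<le> d * ln (real (card I) - 1) + bin_entropy d"
      using fin_core[OF fin qn pn qs ps d' d0 d1] .
    show ?thesis using 1 2 tb by linarith
  qed
qed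

lemma pmf_summable_on: "pmf p summable_on A"
proof -
  have "Infinite_Sum.abs_summable_on (pmf p) A"
    using abs_summable_equivalent pmf_abs_summable by blast
  then show ?thesis by simp
qed

lemma pmf_infsum_UNIV: "infsum (pmf p) UNIV = 1"
  using infsetsum_infsum[OF pmf_abs_summable, of p UNIV] infsetsum_pmf_eq_1[of p UNIV] by simp

lemma le_infsum_nonneg:
  fixes f :: "'b \<Rightarrow> real"
  assumes "f summable_on A" "\<And>y. y \<in> A \<Longrightarrow> f y \<ge> 0" "x \<in> A"
  shows "f x \<le> infsum f A"
proof -
  have "infsum f {x} \<le> infsum f A"
    using assms by (intro infsum_mono_neutral) auto
  then show ?thesis by simp
qed

theorem corollary3:
  fixes a :: "nat \<Rightarrow> 'a" and X Y :: "'a pmf" and m M :: nat and \<eta> \<mu> :: real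
  assumes enum: "bij_betw a {1..} (UNIV :: 'a set)"
    and X_vals: "set_pmf X \<subseteq> a ` {1..m}"
    and tv: "d_tv X Y \<le> \<eta>"
    and eta: "0 < \<eta>" "\<eta> < 1"
    and M1: "real M \<ge> real m + 1"
    and M2: "real M \<ge> 1 / (1 - \<eta>)"
    and mu: "\<mu> > 0"
    and tail_summable: "(\<lambda>i. - pmf Y (a i) * ln (pmf Y (a i))) summable_on {M..}"
    and tail: "(\<Sum>\<^sub>\<infinity>i\<in>{M..}. - pmf Y (a i) * ln (pmf Y (a i))) \<le> \<mu>"
  shows "\<bar>entropy_pmf X - entropy_pmf Y\<bar> \<le> \<eta> * ln (real M - 1) + bin_entropy \<eta> + \<mu>"
proof -
  define P where "P = (\<lambda>i. pmf X (a i))"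
  define Q where "Q = (\<lambda>i. pmf Y (a i))"
  define T where "T = infsum Q {M..}"
  define q where "q = (\<lambda>i. if i = M then T else Q i)"
  define I where "I = {1..M}"
  define tailH where "tailH = infsum (\<lambda>i. - Q i * ln (Q i)) {M..}"
  have inj: "inj_on a {1..}" using enum bij_betw_def by blast
  have Mm: "M > m" using M1 by simp
  have eta1: "real M * (1 - \<eta>) \<ge> 1" using M2 eta by (simp add: field_simps)
  have M0: "M \<ge> 1"
  proof (rule ccontr)
    assume "\<not> M \<ge> 1" then have "M = 0" by simp
    then show False using eta1 by simp
  qed
  have P0: "P i = 0" if "i \<ge> 1" "i > m" for i
  proof -
    have "a i \<notin> set_pmf X"
    proof
      assume "a i \<in> set_pmf X"
      then obtain j where j: "j \<in> {1..m}" "a i = a j" using X_vals by auto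
      then have "i = j" using inj that by (auto dest: inj_onD)
      then show False using j that by auto
    qed
    then show ?thesis unfolding P_def by (simp add: set_pmf_iff)
  qed
  have QsumA: "Q summable_on {1..}"
    using summable_on_reindex_bij_betw[OF enum, of "pmf Y"] pmf_summable_on unfolding Q_def by blast
  have Qsum1: "infsum Q {1..} = 1"
    using infsum_reindex_bij_betw[OF enum, of "pmf Y"] pmf_infsum_UNIV unfolding Q_def by simp
  have split: "{1..} = {1..<M} \<union> {M..}" using M0 by auto
  have QsumM: "Q summable_on {M..}" by (rule summable_on_subset_banach[OF QsumA]) (use M0 in auto)
  have Qsplit: "1 = sum Q {1..<M} + T"
  proof -
    have d: "{1..<M} \<inter> {M..} = {}" by auto
    show ?thesis using infsum_Un_disjoint[OF summable_on_finite QsumM d] Qsum1 split unfolding T_def by simp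
  qed
  have Qn: "Q i \<ge> 0" for i unfolding Q_def by simp
  have T0: "T \<ge> 0" unfolding T_def using Qn by (intro infsum_nonneg) auto
  have "sum Q {1..<M} \<ge> 0" using Qn by (intro sum_nonneg) auto
  then have T1: "T \<le> 1" using Qsplit by simp
  have Ieq: "I = insert M {1..<M}" using M0 I_def by auto
  have qs: "sum q I = 1"
  proof -
    have "sum q I = q M + sum q {1..<M}" unfolding Ieq by simp
    also have "sum q {1..<M} = sum Q {1..<M}" unfolding q_def by (intro sum.cong) auto
    finally show ?thesis using Qsplit q_def by simp
  qed
  have aI: "set_pmf X \<subseteq> a ` I" using X_vals Mm I_def by auto
  have injI: "inj_on a I" using inj_on_subset[OF inj, of I] I_def by auto
  have ps: "sum P I = 1"
  proof -
    have "infsum (pmf X) UNIV = infsum (pmf X) (a ` I)"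
      using aI by (intro infsum_cong_neutral) (auto simp: set_pmf_iff)
    also have "\<dots> = sum P I" unfolding P_def using injI I_def by (simp add: sum.reindex)
    finally show ?thesis using pmf_infsum_UNIV[of X] by simp
  qed
  have HX: "entropy_pmf X = (\<Sum>i\<in>I. - P i * ln (P i))"
  proof -
    have "entropy_pmf X = infsum (\<lambda>u. - pmf X u * ln (pmf X u)) (a ` I)"
      unfolding entropy_pmf_def using aI by (intro infsum_cong_neutral) (auto simp: set_pmf_iff)
    also have "\<dots> = (\<Sum>i\<in>I. - P i * ln (P i))" unfolding P_def using injI I_def by (simp add: sum.reindex)
    finally show ?thesis .
  qed
  have HY: "entropy_pmf Y = (\<Sum>i\<in>{1..<M}. - Q i * ln (Q i)) + tailH"
  proof -
    have "entropy_pmf Y = infsum (\<lambda>i. - Q i * ln (Q i)) {1..}"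
      unfolding entropy_pmf_def Q_def using infsum_reindex_bij_betw[OF enum, of "\<lambda>u. - pmf Y u * ln (pmf Y u)"] by simp
    also have "\<dots> = (\<Sum>i\<in>{1..<M}. - Q i * ln (Q i)) + tailH"
      unfolding split tailH_def using tail_summable unfolding Q_def
      by (subst infsum_Un_disjoint) auto
    finally show ?thesis .
  qed
  have tl: "- T * ln T \<le> tailH"
  proof -
    have "infsum (\<lambda>i. Q i * (- ln T)) {M..} = T * (- ln T)"
      unfolding T_def using QsumM by (intro infsum_cmult_left) auto
    moreover have "infsum (\<lambda>i. Q i * (- ln T)) {M..} \<le> tailH"
      unfolding tailH_def
    proof (rule infsum_mono)
      show "(\<lambda>i. Q i * (- ln T)) summable_on {M..}" using QsumM by (rule summable_on_cmult_left)
      show "(\<lambda>i. - Q i * ln (Q i)) summable_on {M..}" using tail_summable unfolding Q_def .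
      fix i :: nat assume i: "i \<in> {M..}"
      have QT: "Q i \<le> T" unfolding T_def using QsumM Qn i by (intro le_infsum_nonneg) auto
      show "Q i * (- ln T) \<le> - Q i * ln (Q i)"
      proof (cases "Q i = 0")
        case False
        then have "Q i > 0" using Qn[of i] by simp
        then have "ln (Q i) \<le> ln T" using QT by simp
        then show ?thesis using Qn[of i] by (simp add: mult_left_mono)
      qed simp
    qed
    ultimately show ?thesis by simp
  qed
  have phiT: "- T * ln T \<ge> 0"
  proof (cases "T = 0")
    case False
    then have "ln T \<le> 0" using T0 T1 by simp
    then show ?thesis using T0 by (simp add: mult_nonneg_nonpos)
  qed simp
  have Hq: "(\<Sum>i\<in>I. - q i * ln (q i)) = (\<Sum>i\<in>{1..<M}. - Q i * ln (Q i)) + (- T * ln T)"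
  proof -
    have "(\<Sum>i\<in>I. - q i * ln (q i)) = - q M * ln (q M) + (\<Sum>i\<in>{1..<M}. - q i * ln (q i))"
      unfolding Ieq by simp
    also have "(\<Sum>i\<in>{1..<M}. - q i * ln (q i)) = (\<Sum>i\<in>{1..<M}. - Q i * ln (Q i))"
      unfolding q_def by (intro sum.cong) auto
    finally show ?thesis unfolding q_def by simp
  qed
  have TV: "(1/2) * (\<Sum>i\<in>I. \<bar>P i - q i\<bar>) \<le> \<eta>"
  proof -
    have PM: "\<bar>P i - Q i\<bar> = Q i" if "i \<in> {M..}" for i
    proof -
      have "P i = 0" using that Mm M0 by (intro P0) auto
      then show ?thesis using Qn[of i] by simp
    qed
    have sM: "(\<lambda>i. \<bar>P i - Q i\<bar>) summable_on {M..}"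
      using iffD2[OF summable_on_cong[of "{M..}" "\<lambda>i. \<bar>P i - Q i\<bar>" Q] QsumM] PM by blast
    have "d_tv X Y = (1/2) * infsum (\<lambda>i. \<bar>P i - Q i\<bar>) {1..}"
      unfolding d_tv_def P_def Q_def using infsum_reindex_bij_betw[OF enum, of "\<lambda>u. \<bar>pmf X u - pmf Y u\<bar>"] by simp
    also have "infsum (\<lambda>i. \<bar>P i - Q i\<bar>) {1..} = (\<Sum>i\<in>{1..<M}. \<bar>P i - Q i\<bar>) + infsum (\<lambda>i. \<bar>P i - Q i\<bar>) {M..}"
      unfolding split using sM by (subst infsum_Un_disjoint) auto
    also have "infsum (\<lambda>i. \<bar>P i - Q i\<bar>) {M..} = T" unfolding T_def using PM by (rule infsum_cong)
    also have "(\<Sum>i\<in>{1..<M}. \<bar>P i - Q i\<bar>) + T = (\<Sum>i\<in>I. \<bar>P i - q i\<bar>)"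
    proof -
      have "(\<Sum>i\<in>I. \<bar>P i - q i\<bar>) = \<bar>P M - q M\<bar> + (\<Sum>i\<in>{1..<M}. \<bar>P i - q i\<bar>)" unfolding Ieq by simp
      also have "(\<Sum>i\<in>{1..<M}. \<bar>P i - q i\<bar>) = (\<Sum>i\<in>{1..<M}. \<bar>P i - Q i\<bar>)"
        unfolding q_def by (intro sum.cong) auto
      moreover have "P M = 0" using M0 Mm by (intro P0) auto
      moreover have "q M = T" unfolding q_def by simp
      ultimately show ?thesis using T0 by simp
    qed
    finally show ?thesis using tv by simp
  qed
  have cI: "card I = M" unfolding I_def by simp
  have fin: "\<bar>(\<Sum>i\<in>I. - P i * ln (P i)) - (\<Sum>i\<in>I. - q i * ln (q i))\<bar> \<le> \<eta> * ln (real (card I) - 1) + bin_entropy \<eta>"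
    by (rule fin_thm[OF _ _ _ ps qs TV eta(1) eta(2)]) (auto simp: I_def P_def q_def Qn T0 cI eta1)
  have tailH_le: "tailH \<le> \<mu>" using tail unfolding tailH_def Q_def .
  show ?thesis using fin HX HY Hq tl phiT tailH_le cI by (simp add: abs_le_iff)
qed

end
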